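(* Let $K\ge 1$ and, for $k=1,\dots,K$, let $a_k>0$, $b_k>0$, $P_{L,k}>0$, $\bar{\gamma}>0$, and let $p>0$, $q>0$. Let $Z_1,\dots,Z_K$ be independent, with $Z_k$ gamma distributed with shape $a_k$ and scale $b_k$ (the moment-matched gamma approximation described in the context), set $\gamma_k=\frac{\bar{\gamma}}{P_{L,k}}Z_k^2$, $\gamma^*=\max_k\gamma_k$, and $P_e=E\left[p\,Q\left(\sqrt{2q\gamma^*}\right)\right]$, where $Q(x)=\frac{1}{\sqrt{2\pi}}\int_x^\infty e^{-t^2/2}dt$. Then $$P_e=\frac{p\sqrt{q}}{2\sqrt{\pi}}\sum_{n_1=0}^{\infty}\cdots\sum_{n_K=0}^{\infty}\prod_{k=1}^{K}\frac{(-1)^{n_k}\left(\sqrt{\frac{P_{L,k}}{\bar{\gamma}b_k^2}}\right)^{a_k+n_k}}{n_k!\,(a_k+n_k)\,\Gamma(a_k)}\cdot\frac{\Gamma\left(\frac{\sum_{k=1}^{K}(a_k+n_k)}{2}+\frac12\right)}{q^{\frac{\sum_{k=1}^{K}(a_k+n_k)}{2}+\frac12}}.$$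
   Context: Model: there are $K$ reflecting surfaces; surface $k$ has $N_k$ elements with mutually independent amplitudes $\alpha_k^{(i)}$ (Nakagami-$m$, shape $m_{k,1}$, spread $\Omega_{k,1}$) and $\beta_k^{(i)}$ (Nakagami-$m$, shape $m_{k,2}$, spread $\Omega_{k,2}$), and $a_k=N_k\mu_k^2/\sigma_k^2$, $b_k=\sigma_k^2/\mu_k$, where $\mu_k,\sigma_k^2$ are the mean and variance of $\alpha_k^{(1)}\beta_k^{(1)}$; the distribution of $\sum_{i=1}^{N_k}\alpha_k^{(i)}\beta_k^{(i)}$ is approximated by the gamma law with shape $a_k$, scale $b_k$. The constants $p,q$ depend on the modulation (e.g. BPSK: $p=q=1$). $P_e$ is the average symbol error probability. *)

theory Defs
  imports "HOL-Probability.Probability"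
begin

definition gamma_density :: "real \<Rightarrow> real \<Rightarrow> real \<Rightarrow> real" where
  "gamma_density a b x =
     (if 0 < x then x powr (a - 1) * exp (- x / b) / (Gamma a * b powr a) else 0)"

definition Qfun :: "real \<Rightarrow> real" where
  "Qfun x = 1 / sqrt (2 * pi) * (LBINT t:{x..}. exp (- (t\<^sup>2) / 2))"

end

theory Submission
  imports Defs
begin

lemma gauss_moment_hk:
  fixes A q :: real assumes A: "A > -1" and q: "q > 0"
  shows "((\<lambda>u. u powr A * exp (- q * u\<^sup>2)) has_integral
           (Gamma ((A+1)/2) / (2 * q powr ((A+1)/2)))) {0..}"
proof -
  define x where "x = (A+1)/2"
  have x: "x > 0" using A by (simp add: x_def)
  define f where "f t = t powr (x - 1) / exp t" for t :: real
  have G: "(f has_integral Gamma x) {0..}" unfolding f_def by (rule Gamma_integral_real[OF x])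
  have Gabs: "f absolutely_integrable_on {0..}"
    by (intro nonnegative_absolutely_integrable_1 has_integral_integrable[OF G]) (simp add: f_def)
  have img: "(\<lambda>u. q * u\<^sup>2) ` {0..} = {0::real..}"
  proof (intro equalityI subsetI)
    fix t :: real assume "t \<in> {0..}"
    hence "t = q * (sqrt (t/q))\<^sup>2" "sqrt (t/q) \<in> {0..}" using q by auto
    thus "t \<in> (\<lambda>u. q * u\<^sup>2) ` {0..}" by blast
  qed (use q in auto)
  have inj: "inj_on (\<lambda>u. q * u\<^sup>2) {0::real..}"
  proof (rule inj_onI)
    fix u v :: real assume uv: "u \<in> {0..}" "v \<in> {0..}" "q * u\<^sup>2 = q * v\<^sup>2"
    hence "u\<^sup>2 = v\<^sup>2" using q by simp
    thus "u = v" using uv by (simp add: power2_eq_iff_nonneg)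
  qed
  have der: "((\<lambda>u. q * u\<^sup>2) has_field_derivative 2 * q * u) (at u within {0..})" for u :: real
    by (auto intro!: derivative_eq_intros)
  note CV = has_absolute_integral_change_of_variables_1'[OF _ der inj, of f "Gamma x"]
  have "(\<lambda>u. \<bar>2 * q * u\<bar> * f (q * u\<^sup>2)) absolutely_integrable_on {0..} \<and>
        integral {0..} (\<lambda>u. \<bar>2 * q * u\<bar> * f (q * u\<^sup>2)) = Gamma x"
  proof -
    have L: "{0::real..} \<in> sets lebesgue" by simp
    show ?thesis using CV[OF L] img Gabs integral_unique[OF G] by simp
  qed
  hence H: "((\<lambda>u. \<bar>2 * q * u\<bar> * f (q * u\<^sup>2)) has_integral Gamma x) {0..}"
    using set_lebesgue_integral_eq_integral absolutely_integrable_on_def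
    by (metis has_integral_integral set_lebesgue_integral_eq_integral(1))
  have eq: "\<bar>2 * q * u\<bar> * f (q * u\<^sup>2) = (2 * q powr x) * (u powr A * exp (- q * u\<^sup>2))"
    if "u \<in> {0..}" for u
  proof (cases "u = 0")
    case True thus ?thesis using x by (simp add: f_def)
  next
    case False
    hence u: "u > 0" using that by auto
    have e1: "u\<^sup>2 = u powr 2" using powr_realpow[OF u, of 2] by simp
    have "(q * u\<^sup>2) powr (x - 1) = q powr (x-1) * (u\<^sup>2) powr (x-1)" using u q by (simp add: powr_mult)
    also have "(u\<^sup>2) powr (x-1) = u powr (2*(x-1))" unfolding e1 by (simp add: powr_powr)
    finally have E1: "(q * u\<^sup>2) powr (x - 1) = q powr (x-1) * u powr (2*(x-1))" .
    have "u powr (2*(x-1)) = u powr (A - 1)" by (rule arg_cong[where f="\<lambda>e. u powr e"]) (simp add: x_def)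
    hence "u powr (2*(x-1)) * u = u * u powr (A - 1)" by simp
    also have "\<dots> = u powr A" using u by (simp add: powr_mult_base)
    finally have E2: "u powr (2*(x-1)) * u = u powr A" .
    have E3: "q powr (x-1) * q = q powr x" using q by (simp add: mult.commute powr_mult_base)
    have "\<bar>2 * q * u\<bar> * f (q * u\<^sup>2) = 2 * (q powr (x-1) * q) * (u powr (2*(x-1)) * u) / exp (q * u\<^sup>2)"
      using u q by (simp add: f_def E1 abs_mult)
    also have "\<dots> = (2 * q powr x) * (u powr A * exp (- q * u\<^sup>2))"
      unfolding E2 E3 by (simp add: exp_minus divide_inverse)
    finally show ?thesis .
  qed
  have "((\<lambda>u. (2 * q powr x) * (u powr A * exp (- q * u\<^sup>2))) has_integral Gamma x) {0..}"
    by (rule has_integral_eq[OF eq H])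
  hence "((\<lambda>u. (2 * q powr x) * (u powr A * exp (- q * u\<^sup>2)) / (2 * q powr x)) has_integral Gamma x / (2 * q powr x)) {0..}"
    by (rule has_integral_divide)
  thus ?thesis using q by (simp add: x_def)
qed


lemma gauss_moment:
  fixes A q :: real assumes A: "A > -1" and q: "q > 0"
  shows "(\<integral>\<^sup>+u. ennreal (indicator {0..} u * (u powr A * exp (- q * u\<^sup>2))) \<partial>lborel)
           = ennreal (Gamma ((A+1)/2) / (2 * q powr ((A+1)/2)))"
    and "has_bochner_integral lborel (\<lambda>u. indicator {0..} u * (u powr A * exp (- q * u\<^sup>2)))
           (Gamma ((A+1)/2) / (2 * q powr ((A+1)/2)))"
proof -
  show N: "(\<integral>\<^sup>+u. ennreal (indicator {0..} u * (u powr A * exp (- q * u\<^sup>2))) \<partial>lborel)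
           = ennreal (Gamma ((A+1)/2) / (2 * q powr ((A+1)/2)))"
    using nn_integral_has_integral_lebesgue[OF _ gauss_moment_hk[OF A q]] by simp
  have pos: "0 \<le> Gamma ((A+1)/2) / (2 * q powr ((A+1)/2))"
    using A q by (intro divide_nonneg_pos Gamma_real_nonneg) auto
  show "has_bochner_integral lborel (\<lambda>u. indicator {0..} u * (u powr A * exp (- q * u\<^sup>2)))
           (Gamma ((A+1)/2) / (2 * q powr ((A+1)/2)))"
    using nn_integral_eq_integrable[THEN iffD1, OF _ _ pos N] by (auto simp: has_bochner_integral_iff)
qed

lemma powr_int:
  fixes s y :: real assumes s: "s > -1" and y: "y \<ge> 0"
  shows "(\<integral>\<^sup>+t. ennreal (indicator {0..y} t * t powr s) \<partial>lborel) = ennreal (y powr (s+1) / (s+1))"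
    and "has_bochner_integral lborel (\<lambda>t. indicator {0..y} t * t powr s) (y powr (s+1) / (s+1))"
proof -
  show N: "(\<integral>\<^sup>+t. ennreal (indicator {0..y} t * t powr s) \<partial>lborel) = ennreal (y powr (s+1) / (s+1))"
    using nn_integral_has_integral_lebesgue[OF _ has_integral_powr_from_0[OF s y]] by simp
  have pos: "0 \<le> y powr (s+1) / (s+1)" using s by simp
  show "has_bochner_integral lborel (\<lambda>t. indicator {0..y} t * t powr s) (y powr (s+1) / (s+1))"
    using nn_integral_eq_integrable[THEN iffD1, OF _ _ pos N] by (auto simp: has_bochner_integral_iff)
qed




lemma lower_gamma_series:
  fixes a b y :: real assumes a: "a > 0" and b: "b > 0" and y: "y \<ge> 0"
  shows "(\<lambda>m. (-1)^m * y powr (a + real m) / (b^m * fact m * (a + real m))) sums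
           (\<integral>t. indicator {0..y} t * (t powr (a-1) * exp (-t/b)) \<partial>lborel)"
    and "integrable lborel (\<lambda>t. indicator {0..y} t * (t powr (a-1) * exp (-t/b)))"
proof -
  define g where "g m t = indicator {0..y} t * t powr (a - 1 + real m)" for m t
  have gi: "has_bochner_integral lborel (g m) (y powr (a + real m) / (a + real m))" for m
    using powr_int(2)[of "a - 1 + real m" y] a y unfolding g_def by (simp add: add_ac)
  define c where "c m = (-1)^m / (b^m * fact m)" for m :: nat
  define f where "f m t = c m * g m t" for m t
  have fi: "has_bochner_integral lborel (f m) (c m * (y powr (a + real m) / (a + real m)))" for m
    unfolding f_def[abs_def] by (intro has_bochner_integral_mult_right gi)
  have g_nn: "g m t \<ge> 0" for m t by (simp add: g_def)
  have fsum: "(\<lambda>m. f m t) sums (indicator {0..y} t * (t powr (a-1) * exp (-t/b)))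
      \<and> summable (\<lambda>m. norm (f m t))" for t
  proof (cases "t \<in> {0<..y}")
    case True
    hence t: "t > 0" "t \<le> y" by auto
    have fe: "f m t = t powr (a-1) * ((-t/b)^m /\<^sub>R fact m)" for m
    proof -
      have "t powr (a - 1 + real m) = t powr (a-1) * t^m" using t by (simp add: powr_add powr_realpow)
      moreover have "(-(t/b))^m = (-1)^m * (t^m / b^m)"
      proof -
        have "(-(t/b))^m = ((-1) * (t/b))^m" by simp
        also have "\<dots> = (-1)^m * (t^m / b^m)" by (simp only: power_mult_distrib power_divide)
        finally show ?thesis .
      qed
      ultimately show ?thesis using t b
        by (simp add: f_def g_def c_def field_simps)
    qed
    have s1: "(\<lambda>m. f m t) sums (t powr (a-1) * exp (-t/b))"
      unfolding fe by (intro sums_mult exp_converges)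
    have nfe: "norm (f m t) = t powr (a-1) * (inverse (fact m) * (t/b)^m)" for m
      unfolding fe using t b by (simp add: abs_mult power_abs divide_inverse mult_ac)
    have "summable (\<lambda>m. norm (f m t))" unfolding nfe by (intro summable_mult summable_exp)
    thus ?thesis using s1 t by simp
  next
    case False
    have fz: "f m t = 0" for m
    proof (cases "t = 0")
      case True thus ?thesis using a by (simp add: f_def g_def)
    next
      case False thus ?thesis using \<open>t \<notin> {0<..y}\<close> by (auto simp: f_def g_def indicator_def)
    qed
    have z: "indicator {0..y} t * (t powr (a-1) * exp (-t/b)) = 0"
      using False by (cases "t = 0") (auto simp: indicator_def)
    show ?thesis unfolding z fz by simp
  qed
  have nint: "(\<integral>t. norm (f m t) \<partial>lborel) = \<bar>c m\<bar> * (y powr (a + real m) / (a + real m))" for m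
  proof -
    have "(\<lambda>t. norm (f m t)) = (\<lambda>t. \<bar>c m\<bar> * g m t)"
      using g_nn by (auto simp: f_def abs_mult)
    thus ?thesis using gi[of m] by (simp add: has_bochner_integral_integral_eq)
  qed
  have summ_int: "summable (\<lambda>m. \<integral>t. norm (f m t) \<partial>lborel)"
  proof (cases "y = 0")
    case True thus ?thesis unfolding nint using a by simp
  next
    case False
    hence y': "y > 0" using y by simp
    show ?thesis unfolding nint
    proof (rule summable_comparison_test')
      show "summable (\<lambda>m. (y powr a / a) * (inverse (fact m) * (y/b)^m))"
        by (intro summable_mult summable_exp)
      fix m :: nat
      have "norm (\<bar>c m\<bar> * (y powr (a + real m) / (a + real m)))
            = (y powr a * (y/b)^m / fact m) / (a + real m)"
        using y' b a by (simp add: c_def powr_add powr_realpow abs_mult power_abs power_divide field_simps)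
      also have "\<dots> \<le> (y powr a * (y/b)^m / fact m) / a"
        using a y' b by (intro divide_left_mono) auto
      finally show "norm (\<bar>c m\<bar> * (y powr (a + real m) / (a + real m))) \<le> (y powr a / a) * (inverse (fact m) * (y/b)^m)"
        by (simp add: field_simps)
    qed
  qed
  have int_f: "integrable lborel (f m)" for m using fi[of m] by (auto simp: has_bochner_integral_iff)
  have fm[measurable]: "f m \<in> borel_measurable lborel" for m using int_f by auto
  have S: "(\<lambda>m. integral\<^sup>L lborel (f m)) sums (\<integral>t. (\<Sum>m. f m t) \<partial>lborel)"
    by (rule sums_integral[OF int_f _ summ_int]) (use fsum in auto)
  have I: "integrable lborel (\<lambda>t. (\<Sum>m. f m t))"
    by (rule integrable_suminf[OF int_f _ summ_int]) (use fsum in auto)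
  have suminf_eq: "(\<lambda>t. (\<Sum>m. f m t)) = (\<lambda>t. indicator {0..y} t * (t powr (a-1) * exp (-t/b)))"
    by (rule ext, rule sums_unique[symmetric]) (use fsum in blast)
  have ie: "integral\<^sup>L lborel (f m) = (-1)^m * y powr (a + real m) / (b^m * fact m * (a + real m))" for m
    using fi[of m] by (simp add: has_bochner_integral_integral_eq c_def)
  show "(\<lambda>m. (-1)^m * y powr (a + real m) / (b^m * fact m * (a + real m))) sums
           (\<integral>t. indicator {0..y} t * (t powr (a-1) * exp (-t/b)) \<partial>lborel)"
    using S unfolding ie suminf_eq .
  show "integrable lborel (\<lambda>t. indicator {0..y} t * (t powr (a-1) * exp (-t/b)))"
    using I unfolding suminf_eq .
qed




definition lgterm :: "real \<Rightarrow> real \<Rightarrow> nat \<Rightarrow> real" where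
  "lgterm a x m = (-1)^m * x powr (a + real m) / (fact m * (a + real m) * Gamma a)"

lemma cdf_series:
  fixes a b x :: real assumes a: "a > 0" and b: "b > 0" and x: "x \<ge> 0"
  shows "summable (\<lambda>m. \<bar>lgterm a x m\<bar>)"
    and "lgterm a x sums (\<integral>t. indicator {0..b*x} t * (t powr (a-1) * exp (-t/b)) \<partial>lborel / (Gamma a * b powr a))"
    and "(\<integral>\<^sup>+t. ennreal (gamma_density a b t) * indicator {..b*x} t \<partial>lborel)
          = ennreal (\<integral>t. indicator {0..b*x} t * (t powr (a-1) * exp (-t/b)) \<partial>lborel / (Gamma a * b powr a))"
proof -
  define y where "y = b * x"
  have y: "y \<ge> 0" using b x by (simp add: y_def)
  have Ga: "Gamma a > 0" using a by (simp add: Gamma_real_pos)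
  define I where "I = (\<integral>t. indicator {0..y} t * (t powr (a-1) * exp (-t/b)) \<partial>lborel)"
  note LG = lower_gamma_series[OF a b y]
  have teq: "(-1)^m * y powr (a + real m) / (b^m * fact m * (a + real m)) = (b powr a * Gamma a) * lgterm a x m" for m
  proof -
    have "y powr (a + real m) = b powr a * b^m * x powr (a + real m)"
      using b x by (simp add: y_def powr_mult powr_add powr_realpow)
    moreover have Gne: "Gamma a \<noteq> 0" using Ga by simp
    ultimately show ?thesis unfolding lgterm_def using b a by (simp add: divide_simps Gne)
  qed
  have "(\<lambda>m. (b powr a * Gamma a) * lgterm a x m) sums I" using LG(1) unfolding teq I_def .
  hence "(\<lambda>m. (b powr a * Gamma a) * lgterm a x m / (b powr a * Gamma a)) sums (I / (b powr a * Gamma a))"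
    by (rule sums_divide)
  thus "lgterm a x sums (\<integral>t. indicator {0..b*x} t * (t powr (a-1) * exp (-t/b)) \<partial>lborel / (Gamma a * b powr a))"
    using b Ga by (simp add: I_def y_def mult.commute)
  show "summable (\<lambda>m. \<bar>lgterm a x m\<bar>)"
  proof (cases "x = 0")
    case True thus ?thesis using a by (simp add: lgterm_def)
  next
    case False
    hence x': "x > 0" using x by simp
    show ?thesis
    proof (rule summable_comparison_test')
      show "summable (\<lambda>m. (x powr a / (a * Gamma a)) * (inverse (fact m) * x^m))"
        by (intro summable_mult summable_exp)
      fix m :: nat
      have "norm \<bar>lgterm a x m\<bar> = (x powr a * x^m / fact m) / ((a + real m) * Gamma a)"
        using x' a Ga by (simp add: lgterm_def powr_add powr_realpow abs_mult field_simps)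
      also have "\<dots> \<le> (x powr a * x^m / fact m) / (a * Gamma a)"
        using a x' Ga by (intro divide_left_mono mult_right_mono) auto
      finally show "norm \<bar>lgterm a x m\<bar> \<le> (x powr a / (a * Gamma a)) * (inverse (fact m) * x^m)"
        by (simp add: field_simps)
    qed
  qed
  have pw: "ennreal (gamma_density a b t) * indicator {..y} t
      = ennreal (indicator {0..y} t * (t powr (a-1) * exp (-t/b)) / (Gamma a * b powr a))" for t
    by (cases "t > 0"; cases "t \<le> y") (auto simp: gamma_density_def indicator_def)
  have int: "integrable lborel (\<lambda>t. indicator {0..y} t * (t powr (a-1) * exp (-t/b)) / (Gamma a * b powr a))"
    using LG(2) unfolding y_def by simp
  have "(\<integral>\<^sup>+t. ennreal (gamma_density a b t) * indicator {..y} t \<partial>lborel)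
        = ennreal (\<integral>t. indicator {0..y} t * (t powr (a-1) * exp (-t/b)) / (Gamma a * b powr a) \<partial>lborel)"
    unfolding pw using Ga b by (intro nn_integral_eq_integral int) (auto simp: indicator_def)
  thus "(\<integral>\<^sup>+t. ennreal (gamma_density a b t) * indicator {..b*x} t \<partial>lborel)
          = ennreal (\<integral>t. indicator {0..b*x} t * (t powr (a-1) * exp (-t/b)) \<partial>lborel / (Gamma a * b powr a))"
    by (simp add: y_def)
qed




lemma prod_PiE_abs_summable:
  fixes f :: "'a \<Rightarrow> 'b \<Rightarrow> real"
  assumes "finite A" and "\<And>x. x \<in> A \<Longrightarrow> (\<lambda>y. \<bar>f x y\<bar>) summable_on B x"
  shows "(\<lambda>g. \<bar>\<Prod>x\<in>A. f x (g x)\<bar>) summable_on PiE A B"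
  using assms
proof (induction A rule: finite_induct)
  case empty
  show ?case by (simp add: PiE_empty_domain)
next
  case (insert x F)
  have pi: "Pi\<^sub>E (insert x F) B = (\<lambda>(g,y). g(x:=y)) ` (Pi\<^sub>E F B \<times> B x)"
    unfolding PiE_insert_eq
    by (subst swap_product [symmetric]) (simp add: image_image case_prod_unfold)
  have inj: "inj_on (\<lambda>(g, y). g(x := y)) (Pi\<^sub>E F B \<times> B x)"
    using \<open>x \<notin> F\<close> by (rule inj_combinator')
  have IH: "(\<lambda>g. \<bar>\<Prod>x\<in>F. f x (g x)\<bar>) summable_on PiE F B" using insert by auto
  define S where "S = infsum (\<lambda>y. \<bar>f x y\<bar>) (B x)"
  have hx: "((\<lambda>y. \<bar>f x y\<bar>) has_sum S) (B x)" unfolding S_def using insert.prems by auto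
  have eq: "((\<lambda>g. \<bar>\<Prod>x\<in>insert x F. f x (g x)\<bar>) \<circ> (\<lambda>(g,y). g(x:=y)))
        = (\<lambda>(p, y). \<bar>\<Prod>x'\<in>F. f x' (p x')\<bar> * \<bar>f x y\<bar>)"
  proof (rule ext, clarify)
    fix p y
    have "(\<Prod>z\<in>F. f z ((p(x := y)) z)) = (\<Prod>z\<in>F. f z (p z))"
      using insert.hyps by (intro prod.cong) auto
    thus "((\<lambda>g. \<bar>\<Prod>x\<in>insert x F. f x (g x)\<bar>) \<circ> (\<lambda>(g,y). g(x:=y))) (p, y)
        = \<bar>\<Prod>x'\<in>F. f x' (p x')\<bar> * \<bar>f x y\<bar>"
      using insert.hyps by (simp add: abs_mult mult.commute)
  qed
  have "(\<lambda>(p, y). \<bar>\<Prod>x'\<in>F. f x' (p x')\<bar> * \<bar>f x y\<bar>) summable_on Sigma (Pi\<^sub>E F B) (\<lambda>_. B x)"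
  proof (rule summable_on_SigmaI[where g="\<lambda>p. \<bar>\<Prod>x'\<in>F. f x' (p x')\<bar> * S"])
    show "\<And>p. p \<in> Pi\<^sub>E F B \<Longrightarrow> ((\<lambda>y. case (p, y) of (p, y) \<Rightarrow> \<bar>\<Prod>x'\<in>F. f x' (p x')\<bar> * \<bar>f x y\<bar>) has_sum
             \<bar>\<Prod>x'\<in>F. f x' (p x')\<bar> * S) (B x)"
      using has_sum_cmult_right[OF hx] by simp
    show "(\<lambda>p. \<bar>\<Prod>x'\<in>F. f x' (p x')\<bar> * S) summable_on Pi\<^sub>E F B"
      by (rule summable_on_cmult_left[OF IH])
  qed auto
  hence "((\<lambda>g. \<bar>\<Prod>x\<in>insert x F. f x (g x)\<bar>) \<circ> (\<lambda>(g,y). g(x:=y))) summable_on (Pi\<^sub>E F B \<times> B x)"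
    unfolding eq by simp
  thus ?case unfolding pi using summable_on_reindex[OF inj] by blast
qed

lemma prod_PiE_has_sum:
  fixes f :: "'a \<Rightarrow> 'b \<Rightarrow> real"
  assumes "finite A" and "\<And>x. x \<in> A \<Longrightarrow> (\<lambda>y. \<bar>f x y\<bar>) summable_on B x"
  shows "((\<lambda>g. \<Prod>x\<in>A. f x (g x)) has_sum (\<Prod>x\<in>A. infsum (f x) (B x))) (PiE A B)"
proof -
  have "(\<lambda>g. \<Prod>x\<in>A. f x (g x)) summable_on PiE A B"
    using prod_PiE_abs_summable[OF assms] by (subst summable_on_iff_abs_summable_on_real) simp
  moreover have "infsum (\<lambda>g. \<Prod>x\<in>A. f x (g x)) (PiE A B) = (\<Prod>x\<in>A. infsum (f x) (B x))"
    by (rule infsum_prod_PiE_abs[OF assms(1)]) (use assms(2) in auto)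
  ultimately show ?thesis using has_sum_infsum by fastforce
qed




lemma Qfun_enn: "Qfun x = 1 / sqrt (2*pi) * enn2real (\<integral>\<^sup>+t. ennreal (indicator {x..} t * exp (- (t\<^sup>2) / 2)) \<partial>lborel)"
  unfolding Qfun_def set_lebesgue_integral_def
  by (subst integral_eq_nn_integral) auto

lemma Qfun_nonneg: "Qfun x \<ge> 0"
  unfolding Qfun_enn by simp

lemma Qfun_measurable[measurable]: "Qfun \<in> borel_measurable borel"
proof -
  have m[measurable]: "(\<lambda>x::real. \<integral>t. (if x \<le> t then exp (- ((t::real)\<^sup>2) / 2) else 0) \<partial>lborel) \<in> borel_measurable borel"
    by measurable
  have eq: "Qfun = (\<lambda>x. 1 / sqrt (2*pi) * (\<integral>t. (if x \<le> t then exp (- ((t::real)\<^sup>2) / 2) else 0) \<partial>lborel))"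
    unfolding Qfun_def set_lebesgue_integral_def by (intro ext arg_cong[where f="\<lambda>z. _ * z"] Bochner_Integration.integral_cong) (auto simp: indicator_def)
  show ?thesis unfolding eq by measurable
qed

lemma Qfun_nn:
  fixes p q s :: real assumes p: "p \<ge> 0" and q: "q > 0" and s: "s \<ge> 0"
  shows "ennreal (p * Qfun (sqrt (2*q) * s))
       = (\<integral>\<^sup>+u. ennreal (indicator {s..} u * (p * sqrt q / sqrt pi * exp (- q * u\<^sup>2))) \<partial>lborel)"
proof -
  define c where "c = sqrt (2*q)"
  have c: "c > 0" using q by (simp add: c_def)
  define x where "x = c * s"
  define J where "J = (\<integral>\<^sup>+u. ennreal (indicator {s..} u * exp (- q * u\<^sup>2)) \<partial>lborel)"
  have "(\<integral>\<^sup>+t. ennreal (indicator {x..} t * exp (- (t\<^sup>2) / 2)) \<partial>lborel)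
      = ennreal c * (\<integral>\<^sup>+u. ennreal (indicator {x..} (0 + c * u) * exp (- ((0 + c * u)\<^sup>2) / 2)) \<partial>lborel)"
    using nn_integral_real_affine[of "\<lambda>t. ennreal (indicator {x..} t * exp (- (t\<^sup>2) / 2))" c 0] c
    by simp
  also have "(\<lambda>u. ennreal (indicator {x..} (0 + c * u) * exp (- ((0 + c * u)\<^sup>2) / 2)))
           = (\<lambda>u. ennreal (indicator {s..} u * exp (- q * u\<^sup>2)))"
  proof (rule ext)
    fix u
    have "indicator {x..} (0 + c * u) = (indicator {s..} u :: real)"
      using c by (auto simp: x_def indicator_def)
    moreover have "((0 + c * u)\<^sup>2) / 2 = q * u\<^sup>2"
      using q by (simp add: c_def power_mult_distrib)
    ultimately show "ennreal (indicator {x..} (0 + c * u) * exp (- ((0 + c * u)\<^sup>2) / 2))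
           = ennreal (indicator {s..} u * exp (- q * u\<^sup>2))" by simp
  qed
  finally have J1: "(\<integral>\<^sup>+t. ennreal (indicator {x..} t * exp (- (t\<^sup>2) / 2)) \<partial>lborel) = ennreal c * J"
    unfolding J_def .
  have "J \<le> (\<integral>\<^sup>+u. ennreal (indicator {0..} u * (u powr 0 * exp (- q * u\<^sup>2))) \<partial>lborel)"
    unfolding J_def
  proof (rule nn_integral_mono_AE)
    show "AE u in lborel. ennreal (indicator {s..} u * exp (- q * u\<^sup>2))
        \<le> ennreal (indicator {0..} u * (u powr 0 * exp (- q * u\<^sup>2)))"
      using AE_lborel_singleton[of 0]
      by eventually_elim (use s in \<open>auto simp: indicator_def\<close>)
  qed
  also have "\<dots> = ennreal (Gamma ((0+1)/2) / (2 * q powr ((0+1)/2)))"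
    by (rule gauss_moment(1)) (use q in auto)
  finally have Jle: "J \<le> ennreal (Gamma ((0+1)/2) / (2 * q powr ((0+1)/2)))" .
  have Jfin: "J < \<infinity>" by (rule le_less_trans[OF Jle]) simp
  have "p * Qfun (sqrt (2*q) * s) = p / sqrt (2*pi) * c * enn2real J"
    unfolding Qfun_enn c_def[symmetric] x_def[symmetric] J1 by (simp add: enn2real_mult c)
  also have "p / sqrt (2*pi) * c = p * sqrt q / sqrt pi"
    by (simp add: c_def real_sqrt_mult)
  finally have PQ: "p * Qfun (sqrt (2*q) * s) = (p * sqrt q / sqrt pi) * enn2real J" by simp
  have "ennreal (p * Qfun (sqrt (2*q) * s)) = ennreal (p * sqrt q / sqrt pi) * ennreal (enn2real J)"
    unfolding PQ by (rule ennreal_mult) (use p q in auto)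
  also have "ennreal (enn2real J) = J" using Jfin by simp
  finally have "ennreal (p * Qfun (sqrt (2*q) * s)) = ennreal (p * sqrt q / sqrt pi) * J" .
  also have "\<dots> = (\<integral>\<^sup>+u. ennreal (p * sqrt q / sqrt pi) * ennreal (indicator {s..} u * exp (- q * u\<^sup>2)) \<partial>lborel)"
    unfolding J_def by (rule nn_integral_cmult[symmetric]) simp
  also have "\<dots> = (\<integral>\<^sup>+u. ennreal (indicator {s..} u * (p * sqrt q / sqrt pi * exp (- q * u\<^sup>2))) \<partial>lborel)"
  proof (intro nn_integral_cong)
    fix u
    have C0: "0 \<le> p * sqrt q / sqrt pi" using p q by simp
    show "ennreal (p * sqrt q / sqrt pi) * ennreal (indicator {s..} u * exp (- q * u\<^sup>2))
        = ennreal (indicator {s..} u * (p * sqrt q / sqrt pi * exp (- q * u\<^sup>2)))"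
      by (subst ennreal_mult[symmetric, OF C0]) (auto simp: mult_ac)
  qed
  finally show ?thesis .
qed




lemma lg_term_bound:
  fixes a x :: real assumes a: "a > 0" and x: "x \<ge> 0"
  shows "\<bar>lgterm a x m\<bar> \<le> (x powr a / (a * Gamma a)) * (inverse (fact m) * x^m)"
proof (cases "x = 0")
  case True thus ?thesis using a by (simp add: lgterm_def)
next
  case False
  hence x': "x > 0" using x by simp
  have Ga: "Gamma a > 0" using a by (simp add: Gamma_real_pos)
  have "\<bar>lgterm a x m\<bar> = (x powr a * x^m / fact m) / ((a + real m) * Gamma a)"
    using x' a Ga by (simp add: lgterm_def powr_add powr_realpow abs_mult field_simps)
  also have "\<dots> \<le> (x powr a * x^m / fact m) / (a * Gamma a)"
    using a x' Ga by (intro divide_left_mono mult_right_mono) auto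
  finally show ?thesis by (simp add: field_simps)
qed

lemma lg_abs_suminf_bound:
  fixes a x :: real assumes a: "a > 0" and x: "x \<ge> 0"
  shows "(\<Sum>m. \<bar>lgterm a x m\<bar>) \<le> (x powr a / (a * Gamma a)) * exp x"
proof -
  have S: "(\<lambda>m. (x powr a / (a * Gamma a)) * (inverse (fact m) * x^m)) sums ((x powr a / (a * Gamma a)) * exp x)"
    using sums_mult[OF exp_converges[of x], of "x powr a / (a * Gamma a)"] by (simp add: divide_inverse mult_ac)
  have "(\<Sum>m. \<bar>lgterm a x m\<bar>) \<le> (\<Sum>m. (x powr a / (a * Gamma a)) * (inverse (fact m) * x^m))"
    by (rule suminf_le[OF lg_term_bound[OF a x] cdf_series(1)[OF a zero_less_one x] sums_summable[OF S]])
  thus ?thesis using sums_unique[OF S] by simp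
qed

lemma term_integral:
  fixes I :: "nat set" and a \<alpha> :: "nat \<Rightarrow> real" and n :: "nat \<Rightarrow> nat" and q C :: real
  assumes I: "finite I" "I \<noteq> {}" and a: "\<And>k. k \<in> I \<Longrightarrow> a k > 0"
    and al: "\<And>k. k \<in> I \<Longrightarrow> \<alpha> k \<ge> 0" and q: "q > 0"
  shows "has_bochner_integral lborel
     (\<lambda>u. indicator {0..} u * (C * exp (- q * u\<^sup>2)) * (\<Prod>k\<in>I. lgterm (a k) (\<alpha> k * u) (n k)))
     (C * (\<Prod>k\<in>I. (-1)^(n k) * \<alpha> k powr (a k + real (n k)) / (fact (n k) * (a k + real (n k)) * Gamma (a k)))
        * (Gamma ((\<Sum>k\<in>I. a k + real (n k)) / 2 + 1/2) / (2 * q powr ((\<Sum>k\<in>I. a k + real (n k)) / 2 + 1/2))))"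
proof -
  define A where "A = (\<Sum>k\<in>I. a k + real (n k))"
  define P where "P = (\<Prod>k\<in>I. (-1)^(n k) * \<alpha> k powr (a k + real (n k)) / (fact (n k) * (a k + real (n k)) * Gamma (a k)))"
  have A: "A > 0" unfolding A_def using I a by (intro sum_pos) (auto intro: add_pos_nonneg)
  have pw: "indicator {0..} u * (C * exp (- q * u\<^sup>2)) * (\<Prod>k\<in>I. lgterm (a k) (\<alpha> k * u) (n k))
      = (C * P) * (indicator {0..} u * (u powr A * exp (- q * u\<^sup>2)))" for u
  proof (cases "u \<ge> 0")
    case False thus ?thesis by simp
  next
    case True
    have "(\<Prod>k\<in>I. lgterm (a k) (\<alpha> k * u) (n k))
        = (\<Prod>k\<in>I. ((-1)^(n k) * \<alpha> k powr (a k + real (n k)) / (fact (n k) * (a k + real (n k)) * Gamma (a k)))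
              * u powr (a k + real (n k)))"
      using al True by (intro prod.cong refl) (simp add: lgterm_def powr_mult)
    also have "\<dots> = P * (\<Prod>k\<in>I. u powr (a k + real (n k)))"
      unfolding P_def by (rule prod.distrib)
    also have "(\<Prod>k\<in>I. u powr (a k + real (n k))) = u powr A"
    proof (cases "u = 0")
      case True
      obtain k where "k \<in> I" using I by auto
      thus ?thesis using True I by (simp add: prod_zero card_gt_0_iff)
    next
      case False thus ?thesis unfolding A_def by (simp add: powr_sum)
    qed
    finally show ?thesis using True by (simp add: mult_ac)
  qed
  have G: "has_bochner_integral lborel (\<lambda>u. indicator {0..} u * (u powr A * exp (- q * u\<^sup>2)))
           (Gamma ((A+1)/2) / (2 * q powr ((A+1)/2)))"
    by (rule gauss_moment(2)) (use A q in auto)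
  have eq: "(A+1)/2 = A/2 + 1/2" by simp
  have "has_bochner_integral lborel (\<lambda>u. (C * P) * (indicator {0..} u * (u powr A * exp (- q * u\<^sup>2))))
           ((C * P) * (Gamma (A/2 + 1/2) / (2 * q powr (A/2 + 1/2))))"
    using has_bochner_integral_mult_right[OF G, of "C * P"] unfolding eq .
  moreover have fe: "(\<lambda>u. indicator {0..} u * (C * exp (- q * u\<^sup>2)) * (\<Prod>k\<in>I. lgterm (a k) (\<alpha> k * u) (n k)))
      = (\<lambda>u. (C * P) * (indicator {0..} u * (u powr A * exp (- q * u\<^sup>2))))"
    by (rule ext) (rule pw)
  ultimately have "has_bochner_integral lborel
     (\<lambda>u. indicator {0..} u * (C * exp (- q * u\<^sup>2)) * (\<Prod>k\<in>I. lgterm (a k) (\<alpha> k * u) (n k)))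
     ((C * P) * (Gamma (A/2 + 1/2) / (2 * q powr (A/2 + 1/2))))" by simp
  thus ?thesis unfolding A_def P_def by (simp only: mult.assoc)
qed




lemma expectation_formula:
  fixes M :: "'a measure" and Z :: "nat \<Rightarrow> 'a \<Rightarrow> real"
    and K :: nat and a b PL :: "nat \<Rightarrow> real" and gbar p q :: real
  assumes PS: "prob_space M"
    and K: "K \<ge> 1"
    and a: "\<And>k. k \<in> {1..K} \<Longrightarrow> a k > 0"
    and b: "\<And>k. k \<in> {1..K} \<Longrightarrow> b k > 0"
    and PL: "\<And>k. k \<in> {1..K} \<Longrightarrow> PL k > 0"
    and g: "gbar > 0" and p: "p > 0" and q: "q > 0"
    and ind: "prob_space.indep_vars M (\<lambda>_. borel) Z {1..K}"
    and dist: "\<And>k. k \<in> {1..K} \<Longrightarrow>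
           distributed M lborel (Z k) (\<lambda>x. ennreal (gamma_density (a k) (b k) x))"
  shows "prob_space.expectation M
             (\<lambda>\<omega>. p * Qfun (sqrt (2 * q * Max ((\<lambda>k. gbar / PL k * (Z k \<omega>)\<^sup>2) ` {1..K}))))
       = enn2real (\<integral>\<^sup>+u. ennreal (indicator {0..} u * (p * sqrt q / sqrt pi * exp (- q * u\<^sup>2) *
            (\<Prod>k\<in>{1..K}. suminf (lgterm (a k) (sqrt (PL k / (gbar * (b k)\<^sup>2)) * u))))) \<partial>lborel)"
    and "\<And>u k. k \<in> {1..K} \<Longrightarrow> u \<ge> 0 \<Longrightarrow> suminf (lgterm (a k) (sqrt (PL k / (gbar * (b k)\<^sup>2)) * u)) \<ge> 0"
proof -
  interpret prob_space M by (rule PS)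
  define I where "I = {1..K}"
  have I: "finite I" "I \<noteq> {}" using K by (auto simp: I_def)
  define \<alpha> where "\<alpha> k = sqrt (PL k / (gbar * (b k)\<^sup>2))" for k
  define F where "F k u = suminf (lgterm (a k) (\<alpha> k * u))" for k u
  define h where "h u = p * sqrt q / sqrt pi * exp (- q * u\<^sup>2)" for u
  have h_nn: "h u \<ge> 0" for u using p q by (simp add: h_def)
  define V where "V \<omega> = Max ((\<lambda>k. gbar / PL k * (Z k \<omega>)\<^sup>2) ` I)" for \<omega>
  have Zm[measurable]: "Z k \<in> borel_measurable M" if "k \<in> I" for k
    using dist[of k] that unfolding I_def by (auto dest: distributed_measurable)
  have Vm[measurable]: "V \<in> borel_measurable M"
    unfolding V_def using I(1) by (intro borel_measurable_Max) auto
  have V_nn: "V \<omega> \<ge> 0" for \<omega>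
  proof -
    obtain k where k: "k \<in> I" using I by auto
    have "gbar / PL k * (Z k \<omega>)\<^sup>2 \<ge> 0" using g PL[of k] k by (simp add: I_def)
    also have "gbar / PL k * (Z k \<omega>)\<^sup>2 \<le> V \<omega>" unfolding V_def using I k by (intro Max_ge) auto
    finally show ?thesis .
  qed
  have cdf: "emeasure M (Z k -` {z. gbar / PL k * z\<^sup>2 \<le> u\<^sup>2} \<inter> space M) = ennreal (F k u) \<and> F k u \<ge> 0"
    if k: "k \<in> I" and u: "u \<ge> 0" for k u
  proof -
    have ak: "a k > 0" and bk: "b k > 0" and PLk: "PL k > 0" using a b PL k by (auto simp: I_def)
    have x: "\<alpha> k * u \<ge> 0" unfolding \<alpha>_def using u PLk g
      by (intro mult_nonneg_nonneg real_sqrt_ge_zero divide_nonneg_nonneg) auto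
    note CS = cdf_series[OF ak bk x]
    have ab: "b k * (\<alpha> k * u) = u * sqrt (PL k / gbar)"
      using bk g PLk by (simp add: \<alpha>_def real_sqrt_divide real_sqrt_mult)
    have S: "ennreal (gamma_density (a k) (b k) z) * indicator {z. gbar / PL k * z\<^sup>2 \<le> u\<^sup>2} z
        = ennreal (gamma_density (a k) (b k) z) * indicator {..b k * (\<alpha> k * u)} z" for z
    proof (cases "z > 0")
      case True
      have "gbar / PL k * z\<^sup>2 \<le> u\<^sup>2 \<longleftrightarrow> z\<^sup>2 \<le> (u * sqrt (PL k / gbar))\<^sup>2"
        using g PLk by (simp add: power_mult_distrib field_simps)
      also have "\<dots> \<longleftrightarrow> z \<le> u * sqrt (PL k / gbar)"
        using True u PLk g by (intro power2_le_iff_abs_le[THEN trans]) auto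
      finally show ?thesis unfolding ab by (simp add: indicator_def)
    next
      case False thus ?thesis by (simp add: gamma_density_def)
    qed
    define Ik where "Ik = (\<integral>t. indicator {0..b k * (\<alpha> k * u)} t * (t powr (a k - 1) * exp (-t / b k)) \<partial>lborel)"
    have Ik_nn: "Ik \<ge> 0" unfolding Ik_def by (intro Bochner_Integration.integral_nonneg) auto
    have Fe: "F k u = Ik / (Gamma (a k) * b k powr a k)"
      unfolding F_def Ik_def using CS(2) by (rule sums_unique[symmetric])
    have "emeasure M (Z k -` {z. gbar / PL k * z\<^sup>2 \<le> u\<^sup>2} \<inter> space M)
        = (\<integral>\<^sup>+z. ennreal (gamma_density (a k) (b k) z) * indicator {z. gbar / PL k * z\<^sup>2 \<le> u\<^sup>2} z \<partial>lborel)"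
      using dist[of k] k by (intro distributed_emeasure) (auto simp: I_def)
    also have "\<dots> = ennreal (F k u)" unfolding S CS(3) Fe Ik_def ..
    finally show ?thesis using Fe Ik_nn bk ak by (simp add: Gamma_real_pos)
  qed
  show "\<And>u k. k \<in> {1..K} \<Longrightarrow> u \<ge> 0 \<Longrightarrow> suminf (lgterm (a k) (sqrt (PL k / (gbar * (b k)\<^sup>2)) * u)) \<ge> 0"
    using cdf unfolding F_def \<alpha>_def I_def by blast
  have cdfmax: "emeasure M {\<omega> \<in> space M. sqrt (V \<omega>) \<le> u} = ennreal (indicator {0..} u * (\<Prod>k\<in>I. F k u))" for u
  proof (cases "u \<ge> 0")
    case False
    have E: "{\<omega> \<in> space M. sqrt (V \<omega>) \<le> u} = {}"
      using False V_nn by (auto simp: not_le) (meson less_le_trans not_less real_sqrt_ge_zero)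
    show ?thesis unfolding E using False by simp
  next
    case True
    define A where "A k = Z k -` {z. gbar / PL k * z\<^sup>2 \<le> u\<^sup>2} \<inter> space M" for k
    have set_eq: "{\<omega> \<in> space M. sqrt (V \<omega>) \<le> u} = (\<Inter>k\<in>I. A k)"
    proof -
      have "sqrt (V \<omega>) \<le> u \<longleftrightarrow> (\<forall>k\<in>I. gbar / PL k * (Z k \<omega>)\<^sup>2 \<le> u\<^sup>2)" for \<omega>
        using real_sqrt_le_iff'[OF V_nn True] I unfolding V_def by simp
      thus ?thesis using I(2) by (auto simp: A_def)
    qed
    have "prob (\<Inter>k\<in>I. A k) = (\<Prod>k\<in>I. prob (A k))"
    proof (rule indep_setsD)
      show "indep_sets (\<lambda>i. {Z i -` A \<inter> space M | A. A \<in> sets borel}) I"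
        using ind unfolding indep_vars_def2 I_def by simp
      show "\<forall>j\<in>I. A j \<in> {Z j -` A \<inter> space M | A. A \<in> sets borel}"
      proof
        fix j assume "j \<in> I"
        have "{z::real. gbar / PL j * z\<^sup>2 \<le> u\<^sup>2} \<in> sets borel" by measurable
        thus "A j \<in> {Z j -` A \<inter> space M | A. A \<in> sets borel}" unfolding A_def by blast
      qed
    qed (use I in auto)
    hence "emeasure M (\<Inter>k\<in>I. A k) = ennreal (\<Prod>k\<in>I. prob (A k))"
      by (simp add: emeasure_eq_measure)
    also have "(\<Prod>k\<in>I. prob (A k)) = (\<Prod>k\<in>I. F k u)"
    proof (rule prod.cong)
      fix k assume k: "k \<in> I"
      have e: "emeasure M (A k) = ennreal (F k u)" and Fn: "F k u \<ge> 0"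
        using cdf[OF k True] unfolding A_def by auto
      have "prob (A k) = enn2real (emeasure M (A k))" by (simp add: emeasure_eq_measure)
      also have "\<dots> = F k u" unfolding e using Fn by simp
      finally show "prob (A k) = F k u" .
    qed simp
    finally show ?thesis using True set_eq by simp
  qed
  have Qm[measurable]: "(\<lambda>\<omega>. p * Qfun (sqrt (2 * q * V \<omega>))) \<in> borel_measurable M" by measurable
  have "expectation (\<lambda>\<omega>. p * Qfun (sqrt (2 * q * V \<omega>)))
      = enn2real (\<integral>\<^sup>+\<omega>. ennreal (p * Qfun (sqrt (2 * q * V \<omega>))) \<partial>M)"
    using p Qfun_nonneg by (intro integral_eq_nn_integral Qm AE_I2) simp
  also have "(\<integral>\<^sup>+\<omega>. ennreal (p * Qfun (sqrt (2 * q * V \<omega>))) \<partial>M)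
      = (\<integral>\<^sup>+\<omega>. (\<integral>\<^sup>+u. ennreal (if sqrt (V \<omega>) \<le> u then h u else 0) \<partial>lborel) \<partial>M)"
  proof (rule nn_integral_cong)
    fix \<omega>
    have "sqrt (2 * q * V \<omega>) = sqrt (2*q) * sqrt (V \<omega>)" by (simp add: real_sqrt_mult)
    hence "ennreal (p * Qfun (sqrt (2 * q * V \<omega>)))
       = (\<integral>\<^sup>+u. ennreal (indicator {sqrt (V \<omega>)..} u * (p * sqrt q / sqrt pi * exp (- q * u\<^sup>2))) \<partial>lborel)"
      using Qfun_nn[of p q "sqrt (V \<omega>)"] p q V_nn by simp
    also have "\<dots> = (\<integral>\<^sup>+u. ennreal (if sqrt (V \<omega>) \<le> u then h u else 0) \<partial>lborel)"
      by (intro nn_integral_cong) (simp add: h_def indicator_def)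
    finally show "ennreal (p * Qfun (sqrt (2 * q * V \<omega>))) = \<dots>" .
  qed
  also have "\<dots> = (\<integral>\<^sup>+u. (\<integral>\<^sup>+\<omega>. ennreal (if sqrt (V \<omega>) \<le> u then h u else 0) \<partial>M) \<partial>lborel)"
  proof -
    interpret pair_sigma_finite M lborel ..
    have "(\<lambda>(\<omega>, u). ennreal (if sqrt (V \<omega>) \<le> u then h u else 0)) \<in> borel_measurable (M \<Otimes>\<^sub>M lborel)"
      unfolding h_def by measurable
    from Fubini'[OF this] show ?thesis by simp
  qed
  also have "\<dots> = (\<integral>\<^sup>+u. ennreal (h u) * emeasure M {\<omega> \<in> space M. sqrt (V \<omega>) \<le> u} \<partial>lborel)"
  proof (rule nn_integral_cong)
    fix u
    have "(\<integral>\<^sup>+\<omega>. ennreal (if sqrt (V \<omega>) \<le> u then h u else 0) \<partial>M)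
        = (\<integral>\<^sup>+\<omega>. ennreal (h u) * indicator {\<omega> \<in> space M. sqrt (V \<omega>) \<le> u} \<omega> \<partial>M)"
      by (intro nn_integral_cong) (auto simp: indicator_def)
    also have "\<dots> = ennreal (h u) * emeasure M {\<omega> \<in> space M. sqrt (V \<omega>) \<le> u}"
      by (intro nn_integral_cmult_indicator) measurable
    finally show "(\<integral>\<^sup>+\<omega>. ennreal (if sqrt (V \<omega>) \<le> u then h u else 0) \<partial>M) = \<dots>" .
  qed
  also have "\<dots> = (\<integral>\<^sup>+u. ennreal (indicator {0..} u * (h u * (\<Prod>k\<in>I. F k u))) \<partial>lborel)"
  proof (rule nn_integral_cong)
    fix u
    show "ennreal (h u) * emeasure M {\<omega> \<in> space M. sqrt (V \<omega>) \<le> u}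
        = ennreal (indicator {0..} u * (h u * (\<Prod>k\<in>I. F k u)))"
    proof (cases "u \<ge> 0")
      case True
      have "(\<Prod>k\<in>I. F k u) \<ge> 0" using cdf True by (intro prod_nonneg) auto
      thus ?thesis unfolding cdfmax using True h_nn by (simp add: ennreal_mult)
    qed (simp add: cdfmax)
  qed
  finally show "expectation
             (\<lambda>\<omega>. p * Qfun (sqrt (2 * q * Max ((\<lambda>k. gbar / PL k * (Z k \<omega>)\<^sup>2) ` {1..K}))))
       = enn2real (\<integral>\<^sup>+u. ennreal (indicator {0..} u * (p * sqrt q / sqrt pi * exp (- q * u\<^sup>2) *
            (\<Prod>k\<in>{1..K}. suminf (lgterm (a k) (sqrt (PL k / (gbar * (b k)\<^sup>2)) * u))))) \<partial>lborel)"
    unfolding V_def I_def h_def F_def \<alpha>_def by (simp add: mult.assoc)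
qed




lemma sq_bound:
  fixes \<beta> q u :: real assumes q: "q > 0"
  shows "exp (\<beta> * u) * exp (- q * u\<^sup>2) \<le> exp (\<beta>\<^sup>2 / q) * exp (- (3*q/4) * u\<^sup>2)"
proof -
  have "0 \<le> (\<beta> - q*u/2)\<^sup>2 / q" using q by simp
  also have "(\<beta> - q*u/2)\<^sup>2 / q = \<beta>\<^sup>2 / q - \<beta> * u + q * u\<^sup>2 / 4"
    using q by (simp add: power2_diff field_simps power2_eq_square)
  finally have "\<beta> * u + (- q * u\<^sup>2) \<le> \<beta>\<^sup>2 / q + (- (3*q/4) * u\<^sup>2)" by simp
  thus ?thesis by (simp only: exp_add[symmetric] exp_le_cancel_iff)
qed

lemma prod_L_bound:
  fixes I :: "nat set" and a \<alpha> :: "nat \<Rightarrow> real" and u :: real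
  assumes I: "finite I" "I \<noteq> {}" and a: "\<And>k. k \<in> I \<Longrightarrow> a k > 0"
    and al: "\<And>k. k \<in> I \<Longrightarrow> \<alpha> k \<ge> 0" and u: "u \<ge> 0"
  shows "(\<Prod>k\<in>I. (\<Sum>m. \<bar>lgterm (a k) (\<alpha> k * u) m\<bar>))
       \<le> (\<Prod>k\<in>I. \<alpha> k powr a k / (a k * Gamma (a k))) * (u powr (\<Sum>k\<in>I. a k) * exp ((\<Sum>k\<in>I. \<alpha> k) * u))"
proof -
  have "(\<Prod>k\<in>I. (\<Sum>m. \<bar>lgterm (a k) (\<alpha> k * u) m\<bar>))
       \<le> (\<Prod>k\<in>I. ((\<alpha> k * u) powr a k / (a k * Gamma (a k))) * exp (\<alpha> k * u))"
    using a al u by (intro prod_mono conjI suminf_nonneg lg_abs_suminf_bound cdf_series(1)[of _ 1]) auto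
  also have "\<dots> = (\<Prod>k\<in>I. (\<alpha> k powr a k / (a k * Gamma (a k))) * (u powr a k * exp (\<alpha> k * u)))"
    using al u by (intro prod.cong refl) (simp add: powr_mult)
  also have "\<dots> = (\<Prod>k\<in>I. \<alpha> k powr a k / (a k * Gamma (a k))) * ((\<Prod>k\<in>I. u powr a k) * (\<Prod>k\<in>I. exp (\<alpha> k * u)))"
    by (simp only: prod.distrib)
  also have "(\<Prod>k\<in>I. u powr a k) = u powr (\<Sum>k\<in>I. a k)"
  proof (cases "u = 0")
    case True
    obtain k where "k \<in> I" using I by auto
    thus ?thesis using True I by (simp add: prod_zero card_gt_0_iff)
  next
    case False thus ?thesis by (simp add: powr_sum)
  qed
  also have "(\<Prod>k\<in>I. exp (\<alpha> k * u)) = exp ((\<Sum>k\<in>I. \<alpha> k) * u)"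
    using I(1) by (simp add: exp_sum sum_distrib_right)
  finally show ?thesis .
qed




theorem theorem4:
  fixes M :: "'a measure" and Z :: "nat \<Rightarrow> 'a \<Rightarrow> real"
    and K :: nat and a b PL :: "nat \<Rightarrow> real" and gbar p q :: real
  assumes "prob_space M"
    and "K \<ge> 1"
    and "\<And>k. k \<in> {1..K} \<Longrightarrow> a k > 0"
    and "\<And>k. k \<in> {1..K} \<Longrightarrow> b k > 0"
    and "\<And>k. k \<in> {1..K} \<Longrightarrow> PL k > 0"
    and "gbar > 0" and "p > 0" and "q > 0"
    and "prob_space.indep_vars M (\<lambda>_. borel) Z {1..K}"
    and "\<And>k. k \<in> {1..K} \<Longrightarrow>
           distributed M lborel (Z k) (\<lambda>x. ennreal (gamma_density (a k) (b k) x))"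
  shows "((\<lambda>n. p * sqrt q / (2 * sqrt pi) *
            (\<Prod>k\<in>{1..K}. (-1) ^ n k * (sqrt (PL k / (gbar * (b k)\<^sup>2))) powr (a k + real (n k))
                 / (fact (n k) * (a k + real (n k)) * Gamma (a k))) *
            Gamma ((\<Sum>k\<in>{1..K}. a k + real (n k)) / 2 + 1 / 2) /
            q powr ((\<Sum>k\<in>{1..K}. a k + real (n k)) / 2 + 1 / 2))
         has_sum
           prob_space.expectation M
             (\<lambda>\<omega>. p * Qfun (sqrt (2 * q * Max ((\<lambda>k. gbar / PL k * (Z k \<omega>)\<^sup>2) ` {1..K})))))
         (PiE {1..K} (\<lambda>_. UNIV))"
proof -
  note assms_all = assms
  note EF = expectation_formula[where M=M and Z=Z and K=K and a=a and b=b and PL=PL and gbar=gbar and p=p and q=q, OF assms]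
  note ak = assms(3) and bk = assms(4) and PLk = assms(5) and g = assms(6) and p = assms(7) and q = assms(8)
  define I where "I = {1..K::nat}"
  have I: "finite I" "I \<noteq> {}" using assms(2) by (auto simp: I_def)
  define \<alpha> where "\<alpha> k = sqrt (PL k / (gbar * (b k)\<^sup>2))" for k
  have al: "\<alpha> k \<ge> 0" if "k \<in> I" for k
    unfolding \<alpha>_def using PLk[of k] g that by (intro real_sqrt_ge_zero divide_nonneg_nonneg) (auto simp: I_def)
  have a: "a k > 0" if "k \<in> I" for k using ak that by (auto simp: I_def)
  define C0 where "C0 = p * sqrt q / sqrt pi"
  have C0: "C0 \<ge> 0" using p q by (simp add: C0_def)
  define c where "c u = indicator {0..} u * (C0 * exp (- q * u\<^sup>2))" for u :: real
  have c_nn: "c u \<ge> 0" for u using C0 by (simp add: c_def)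
  define F where "F k u = suminf (lgterm (a k) (\<alpha> k * u))" for k u
  define L where "L k u = (\<Sum>m. \<bar>lgterm (a k) (\<alpha> k * u) m\<bar>)" for k u
  define \<Phi> where "\<Phi> u = c u * (\<Prod>k\<in>I. F k u)" for u
  define H where "H u = c u * (\<Prod>k\<in>I. L k u)" for u
  define N where "N = PiE I (\<lambda>_. UNIV :: nat set)"
  define fn where "fn n u = c u * (\<Prod>k\<in>I. lgterm (a k) (\<alpha> k * u) (n k))" for n :: "nat \<Rightarrow> nat" and u
  define T where "T n = p * sqrt q / (2 * sqrt pi) *
            (\<Prod>k\<in>{1..K}. (-1) ^ n k * (sqrt (PL k / (gbar * (b k)\<^sup>2))) powr (a k + real (n k))
                 / (fact (n k) * (a k + real (n k)) * Gamma (a k))) *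
            Gamma ((\<Sum>k\<in>{1..K}. a k + real (n k)) / 2 + 1 / 2) /
            q powr ((\<Sum>k\<in>{1..K}. a k + real (n k)) / 2 + 1 / 2)" for n :: "nat \<Rightarrow> nat"
  have F_nn: "F k u \<ge> 0" if "k \<in> I" "u \<ge> 0" for k u
    using EF(2)[where k=k and u=u] that unfolding F_def \<alpha>_def I_def by blast
  have \<Phi>_nn: "\<Phi> u \<ge> 0" for u
  proof (cases "u \<ge> 0")
    case True
    have "(\<Prod>k\<in>I. F k u) \<ge> 0" using F_nn True by (intro prod_nonneg) auto
    thus ?thesis unfolding \<Phi>_def using c_nn by simp
  qed (simp add: \<Phi>_def c_def)
  have Tn: "has_bochner_integral lborel (fn n) (T n)" for n
  proof -
    have "has_bochner_integral lborel
       (\<lambda>u. indicator {0..} u * (C0 * exp (- q * u\<^sup>2)) * (\<Prod>k\<in>I. lgterm (a k) (\<alpha> k * u) (n k)))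
       (C0 * (\<Prod>k\<in>I. (-1)^(n k) * \<alpha> k powr (a k + real (n k)) / (fact (n k) * (a k + real (n k)) * Gamma (a k)))
        * (Gamma ((\<Sum>k\<in>I. a k + real (n k)) / 2 + 1/2) / (2 * q powr ((\<Sum>k\<in>I. a k + real (n k)) / 2 + 1/2))))"
      by (rule term_integral[OF I a al q])
    moreover have "fn n = (\<lambda>u. indicator {0..} u * (C0 * exp (- q * u\<^sup>2)) * (\<Prod>k\<in>I. lgterm (a k) (\<alpha> k * u) (n k)))"
      by (simp add: fn_def[abs_def] c_def)
    moreover have "(C0 * (\<Prod>k\<in>I. (-1)^(n k) * \<alpha> k powr (a k + real (n k)) / (fact (n k) * (a k + real (n k)) * Gamma (a k)))
        * (Gamma ((\<Sum>k\<in>I. a k + real (n k)) / 2 + 1/2) / (2 * q powr ((\<Sum>k\<in>I. a k + real (n k)) / 2 + 1/2)))) = T n"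
      unfolding T_def C0_def I_def \<alpha>_def by (simp add: field_simps)
    ultimately show ?thesis by simp
  qed
  have pt: "((\<lambda>n. fn n u) has_sum \<Phi> u) N \<and> ((\<lambda>n. \<bar>fn n u\<bar>) has_sum H u) N" for u
  proof (cases "u \<ge> 0")
    case False
    hence "c u = 0" by (simp add: c_def)
    thus ?thesis by (simp add: fn_def \<Phi>_def H_def)
  next
    case True
    have x: "\<alpha> k * u \<ge> 0" if "k \<in> I" for k using al[OF that] True by simp
    have sm: "summable (\<lambda>m. \<bar>lgterm (a k) (\<alpha> k * u) m\<bar>)" if "k \<in> I" for k
      by (rule cdf_series(1)[OF a[OF that] zero_less_one x[OF that]])
    have s1: "(\<lambda>m. \<bar>lgterm (a k) (\<alpha> k * u) m\<bar>) summable_on UNIV" if "k \<in> I" for k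
      using sm[OF that] by (rule summable_nonneg_imp_summable_on) simp
    have s2: "(\<lambda>m. \<bar>\<bar>lgterm (a k) (\<alpha> k * u) m\<bar>\<bar>) summable_on UNIV" if "k \<in> I" for k
      using s1[OF that] by simp
    have inf1: "infsum (lgterm (a k) (\<alpha> k * u)) UNIV = F k u" if "k \<in> I" for k
      unfolding F_def
      by (rule infsumI, rule norm_summable_imp_has_sum) (use sm[OF that] in \<open>auto intro: summable_sums summable_rabs_cancel\<close>)
    have inf2: "infsum (\<lambda>m. \<bar>lgterm (a k) (\<alpha> k * u) m\<bar>) UNIV = L k u" if "k \<in> I" for k
      unfolding L_def
      by (rule infsumI, rule norm_summable_imp_has_sum) (use sm[OF that] in \<open>auto intro: summable_sums\<close>)
    have P1: "((\<lambda>g. \<Prod>k\<in>I. lgterm (a k) (\<alpha> k * u) (g k)) has_sum (\<Prod>k\<in>I. F k u)) N"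
      using prod_PiE_has_sum[OF I(1), of "\<lambda>k m. lgterm (a k) (\<alpha> k * u) m" "\<lambda>_. UNIV"] s1 inf1
      unfolding N_def by simp
    have P2: "((\<lambda>g. \<Prod>k\<in>I. \<bar>lgterm (a k) (\<alpha> k * u) (g k)\<bar>) has_sum (\<Prod>k\<in>I. L k u)) N"
      using prod_PiE_has_sum[OF I(1), of "\<lambda>k m. \<bar>lgterm (a k) (\<alpha> k * u) m\<bar>" "\<lambda>_. UNIV"] s2 inf2
      unfolding N_def by simp
    have "((\<lambda>n. fn n u) has_sum \<Phi> u) N"
      unfolding fn_def \<Phi>_def by (rule has_sum_cmult_right[OF P1])
    moreover have "((\<lambda>n. \<bar>fn n u\<bar>) has_sum H u) N"
    proof -
      have "((\<lambda>g. c u * (\<Prod>k\<in>I. \<bar>lgterm (a k) (\<alpha> k * u) (g k)\<bar>)) has_sum H u) N"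
        unfolding H_def by (rule has_sum_cmult_right[OF P2])
      moreover have "\<bar>fn n u\<bar> = c u * (\<Prod>k\<in>I. \<bar>lgterm (a k) (\<alpha> k * u) (n k)\<bar>)" for n
        using c_nn[of u] prod_norm[of "\<lambda>k. lgterm (a k) (\<alpha> k * u) (n k)" I]
        by (simp add: fn_def abs_mult)
      ultimately show ?thesis by simp
    qed
    ultimately show ?thesis by blast
  qed
  have cN: "countable N" unfolding N_def by (intro countable_PiE I) auto
  have iN: "infinite N"
  proof
    assume fin: "finite N"
    obtain k0 where k0: "k0 \<in> I" using I by auto
    have "UNIV \<subseteq> (\<lambda>g. g k0) ` N"
    proof
      fix m :: nat
      show "m \<in> (\<lambda>g. g k0) ` N"
        by (rule image_eqI[of _ _ "\<lambda>k. if k \<in> I then m else undefined"]) (use k0 in \<open>auto simp: N_def\<close>)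
    qed
    hence "finite (UNIV :: nat set)" using fin by (meson finite_imageI finite_subset)
    thus False by simp
  qed
  define e where "e = from_nat_into N"
  have bij: "bij_betw e UNIV N" unfolding e_def by (rule bij_betw_from_nat_into[OF cN iN])
  define gj where "gj j = fn (e j)" for j
  have g_sums: "(\<lambda>j. gj j u) sums \<Phi> u" for u
    using pt[of u] has_sum_reindex_bij_betw[OF bij, of "\<lambda>n. fn n u"]
    by (auto simp: gj_def intro: has_sum_imp_sums)
  have g_abs_sums: "(\<lambda>j. \<bar>gj j u\<bar>) sums H u" for u
    using pt[of u] has_sum_reindex_bij_betw[OF bij, of "\<lambda>n. \<bar>fn n u\<bar>"]
    by (auto simp: gj_def intro: has_sum_imp_sums)
  have g_int: "integrable lborel (gj j)" for j using Tn[of "e j"] by (auto simp: gj_def has_bochner_integral_iff)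
  have g_meas[measurable]: "gj j \<in> borel_measurable lborel" for j using g_int[of j] by auto
  define s where "s = (\<Sum>k\<in>I. a k)"
  define \<beta> where "\<beta> = (\<Sum>k\<in>I. \<alpha> k)"
  define D where "D = (\<Prod>k\<in>I. \<alpha> k powr a k / (a k * Gamma (a k)))"
  have s: "s > 0" unfolding s_def using I a by (intro sum_pos) auto
  have D: "D \<ge> 0" unfolding D_def using a al by (intro prod_nonneg divide_nonneg_pos) (auto intro: Gamma_real_pos)
  define B where "B = C0 * D * exp (\<beta>\<^sup>2 / q)"
  have Bnn: "B \<ge> 0" using C0 D by (simp add: B_def)
  have H_bound: "H u \<le> B * (indicator {0..} u * (u powr s * exp (- (3*q/4) * u\<^sup>2)))" for u
  proof (cases "u \<ge> 0")
    case False thus ?thesis by (simp add: H_def c_def)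
  next
    case True
    have "H u = C0 * exp (- q * u\<^sup>2) * (\<Prod>k\<in>I. L k u)" using True by (simp add: H_def c_def)
    also have "\<dots> \<le> C0 * exp (- q * u\<^sup>2) * (D * (u powr s * exp (\<beta> * u)))"
      using prod_L_bound[OF I a al True] C0 unfolding L_def D_def s_def \<beta>_def
      by (intro mult_left_mono) auto
    also have "\<dots> = C0 * D * u powr s * (exp (\<beta> * u) * exp (- q * u\<^sup>2))" by (simp add: mult_ac)
    also have "\<dots> \<le> C0 * D * u powr s * (exp (\<beta>\<^sup>2 / q) * exp (- (3*q/4) * u\<^sup>2))"
      using C0 D by (intro mult_left_mono sq_bound q) auto
    also have "\<dots> = B * (indicator {0..} u * (u powr s * exp (- (3*q/4) * u\<^sup>2)))"
      using True by (simp add: B_def mult_ac)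
    finally show ?thesis .
  qed
  have sum_abs_int: "summable (\<lambda>j. \<integral>u. norm (gj j u) \<partial>lborel)"
  proof -
    have "(\<Sum>j. ennreal (\<integral>u. norm (gj j u) \<partial>lborel)) = (\<Sum>j. \<integral>\<^sup>+u. ennreal \<bar>gj j u\<bar> \<partial>lborel)"
    proof (rule suminf_cong)
      fix j
      have "integrable lborel (\<lambda>u. \<bar>gj j u\<bar>)" using g_int[of j] by (rule integrable_abs)
      hence "(\<integral>\<^sup>+u. ennreal \<bar>gj j u\<bar> \<partial>lborel) = ennreal (\<integral>u. \<bar>gj j u\<bar> \<partial>lborel)"
        by (rule nn_integral_eq_integral) simp
      thus "ennreal (\<integral>u. norm (gj j u) \<partial>lborel) = (\<integral>\<^sup>+u. ennreal \<bar>gj j u\<bar> \<partial>lborel)" by simp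
    qed
    also have "\<dots> = (\<integral>\<^sup>+u. (\<Sum>j. ennreal \<bar>gj j u\<bar>) \<partial>lborel)"
      by (rule nn_integral_suminf[symmetric]) measurable
    also have "\<dots> = (\<integral>\<^sup>+u. ennreal (H u) \<partial>lborel)"
    proof (rule nn_integral_cong)
      fix u
      have "(\<Sum>j. ennreal \<bar>gj j u\<bar>) = ennreal (\<Sum>j. \<bar>gj j u\<bar>)"
        by (rule suminf_ennreal2) (auto intro: sums_summable[OF g_abs_sums])
      also have "(\<Sum>j. \<bar>gj j u\<bar>) = H u" by (rule sums_unique[OF g_abs_sums, symmetric])
      finally show "(\<Sum>j. ennreal \<bar>gj j u\<bar>) = ennreal (H u)" .
    qed
    also have "\<dots> \<le> (\<integral>\<^sup>+u. ennreal B * ennreal (indicator {0..} u * (u powr s * exp (- (3*q/4) * u\<^sup>2))) \<partial>lborel)"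
    proof (rule nn_integral_mono)
      fix u
      have X: "0 \<le> indicator {0..} u * (u powr s * exp (- (3*q/4) * u\<^sup>2))" by simp
      have "ennreal (H u) \<le> ennreal (B * (indicator {0..} u * (u powr s * exp (- (3*q/4) * u\<^sup>2))))"
        by (rule ennreal_leI[OF H_bound])
      also have "\<dots> = ennreal B * ennreal (indicator {0..} u * (u powr s * exp (- (3*q/4) * u\<^sup>2)))"
        by (rule ennreal_mult[OF Bnn X])
      finally show "ennreal (H u) \<le> ennreal B * ennreal (indicator {0..} u * (u powr s * exp (- (3*q/4) * u\<^sup>2)))" .
    qed
    also have "\<dots> = ennreal B * ennreal (Gamma ((s+1)/2) / (2 * (3*q/4) powr ((s+1)/2)))"
    proof -
      have GM: "(\<integral>\<^sup>+u. ennreal (indicator {0..} u * (u powr s * exp (- (3*q/4) * u\<^sup>2))) \<partial>lborel)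
          = ennreal (Gamma ((s+1)/2) / (2 * (3*q/4) powr ((s+1)/2)))"
        by (rule gauss_moment(1)) (use s q in auto)
      show ?thesis by (subst nn_integral_cmult) (simp, simp only: GM)
    qed
    also have "\<dots> < \<infinity>" by (simp add: ennreal_mult_less_top)
    finally show ?thesis by (intro summable_suminf_not_top) auto
  qed
  have suminf_g: "(\<lambda>u. \<Sum>j. gj j u) = \<Phi>" by (rule ext, rule sums_unique[symmetric], rule g_sums)
  have S: "(\<lambda>j. integral\<^sup>L lborel (gj j)) sums (\<integral>u. \<Phi> u \<partial>lborel)"
    using sums_integral[OF g_int _ sum_abs_int] g_abs_sums unfolding suminf_g
    by (auto intro: sums_summable)
  have I\<Phi>: "integrable lborel \<Phi>"
    using integrable_suminf[OF g_int _ sum_abs_int] g_abs_sums unfolding suminf_g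
    by (auto intro: sums_summable)
  have "summable (\<lambda>j. norm (integral\<^sup>L lborel (gj j)))"
    by (rule summable_comparison_test'[OF sum_abs_int]) (simp add: integral_norm_bound)
  hence "((\<lambda>j. integral\<^sup>L lborel (gj j)) has_sum (\<integral>u. \<Phi> u \<partial>lborel)) UNIV"
    using S by (rule norm_summable_imp_has_sum)
  hence "((\<lambda>n. integral\<^sup>L lborel (fn n)) has_sum (\<integral>u. \<Phi> u \<partial>lborel)) N"
    using has_sum_reindex_bij_betw[OF bij, of "\<lambda>n. integral\<^sup>L lborel (fn n)"] by (simp add: gj_def)
  hence HS: "(T has_sum (\<integral>u. \<Phi> u \<partial>lborel)) N"
    using has_bochner_integral_integral_eq[OF Tn] by simp
  have "(\<integral>u. \<Phi> u \<partial>lborel) = enn2real (\<integral>\<^sup>+u. ennreal (\<Phi> u) \<partial>lborel)"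
    using I\<Phi> \<Phi>_nn by (intro integral_eq_nn_integral) auto
  also have "\<dots> = prob_space.expectation M
             (\<lambda>\<omega>. p * Qfun (sqrt (2 * q * Max ((\<lambda>k. gbar / PL k * (Z k \<omega>)\<^sup>2) ` {1..K}))))"
  proof -
    have eqP: "(\<lambda>u. ennreal (\<Phi> u)) = (\<lambda>u. ennreal (indicator {0..} u * (p * sqrt q / sqrt pi * exp (- q * u\<^sup>2) *
            (\<Prod>k\<in>{1..K}. suminf (lgterm (a k) (sqrt (PL k / (gbar * (b k)\<^sup>2)) * u))))))"
      by (rule ext) (simp only: \<Phi>_def c_def C0_def F_def \<alpha>_def I_def mult.assoc)
    show ?thesis unfolding eqP by (rule EF(1)[symmetric])
  qed
  finally show ?thesis using HS unfolding T_def N_def I_def by simp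
qed


end
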